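(* Fix integers $m \ge 1$ and $n_1,\dots,n_m \ge 2$, and consider the $m$-dimensional single parity-check product code of dimension $k = \prod_{\ell=1}^m (n_\ell-1)$, transmitted over the binary erasure channel with erasure probability $\epsilon \in [0,1]$ and decoded with Elias' decoder (see context). Let $P_{\mathrm{E}}$ denote the resulting block error probability. Define $\epsilon_0 = \epsilon$ and \[ \epsilon_\ell = \epsilon_{\ell-1}\left(1-(1-\epsilon_{\ell-1})^{n_\ell-1}\right) \quad \text{for } \ell = 1,\dots,m, \] and set $q_{\max} = \epsilon_m$. Then \[ q_{\max} \le P_{\mathrm{E}} \le k\, q_{\max}. \]
   Context: Index set and code. Let $A = \{1,\dots,n_1\}\times\cdots\times\{1,\dots,n_m\}$. The single parity-check product code is the set of binary arrays $x: A \to \{0,1\}$ in which every line in every direction $\ell$ has even weight; a line in direction $\ell$ is obtained by fixing all coordinates except the $\ell$-th. The information positions are $A_{\mathrm{info}} = \{a : a_\ell \le n_\ell-1 \text{ for all } \ell\}$, and a codeword is determined by its entries there. Channel. Each entry is independently erased with probability $\epsilon$ and otherwise received correctly. Notation. For $\ell = 0,\dots,m$ let $A_\ell = \{a \in A : a_i \le n_i-1 \text{ for } i \le \ell\}$. For $a \in A$ and $b \in \{1,\dots,n_\ell\}$, let $a[\ell\leftarrow b]$ denote $a$ with its $\ell$-th coordinate replaced by $b$. Elias' decoder. This decoder processes dimensions $1$ to $m$ in one sweep, applying local SPC decoding to each line. $E_0(a)$ is true iff entry $a$ is not erased. For $\ell \ge 1$ and $a \in A_\ell$, $E_\ell(a)$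 is true iff $E_{\ell-1}(a)$ is true, or $E_{\ell-1}(a[\ell\leftarrow b])$ is true for every $b \ne a_\ell$ with $1 \le b \le n_\ell$. The information bit at $a$ is recovered iff $E_m(a)$ is true, and erased otherwise; the decoder never makes a wrong decision. A block error occurs iff some $a \in A_{\mathrm{info}}$ has $E_m(a)$ false, and $P_{\mathrm{E}}$ is the probability of this event. *)

theory Defs
  imports "HOL-Analysis.Analysis"
begin

text \<open>Coordinates are indexed by 1..m; a position is a function a :: nat => nat with
  a l in {1..n l} for l in {1..m} (and the default value outside, via PiE).\<close>

definition spc_positions :: "nat \<Rightarrow> (nat \<Rightarrow> nat) \<Rightarrow> (nat \<Rightarrow> nat) set" where
  "spc_positions m n = PiE {1..m} (\<lambda>l. {1..n l})"

definition spc_info :: "nat \<Rightarrow> (nat \<Rightarrow> nat) \<Rightarrow> (nat \<Rightarrow> nat) set" where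
  "spc_info m n = {a \<in> spc_positions m n. \<forall>l\<in>{1..m}. a l \<le> n l - 1}"

text \<open>Elias' decoder: elias_E n S l a is E_l(a) when the set of erased positions is S.\<close>
fun elias_E :: "(nat \<Rightarrow> nat) \<Rightarrow> (nat \<Rightarrow> nat) set \<Rightarrow> nat \<Rightarrow> (nat \<Rightarrow> nat) \<Rightarrow> bool" where
  "elias_E n S 0 a = (a \<notin> S)"
| "elias_E n S (Suc l) a =
     (elias_E n S l a \<or>
      (\<forall>b\<in>{1..n (Suc l)}. b \<noteq> a (Suc l) \<longrightarrow> elias_E n S l (a(Suc l := b))))"

definition elias_block_error :: "nat \<Rightarrow> (nat \<Rightarrow> nat) \<Rightarrow> (nat \<Rightarrow> nat) set \<Rightarrow> bool" where
  "elias_block_error m n S = (\<exists>a\<in>spc_info m n. \<not> elias_E n S m a)"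

definition elias_PE :: "nat \<Rightarrow> (nat \<Rightarrow> nat) \<Rightarrow> real \<Rightarrow> real" where
  "elias_PE m n eps =
     (\<Sum>S\<in>Pow (spc_positions m n).
        eps ^ card S * (1 - eps) ^ (card (spc_positions m n) - card S)
        * (if elias_block_error m n S then 1 else 0))"

fun eps_seq :: "(nat \<Rightarrow> nat) \<Rightarrow> real \<Rightarrow> nat \<Rightarrow> real" where
  "eps_seq n eps 0 = eps"
| "eps_seq n eps (Suc l) = eps_seq n eps l * (1 - (1 - eps_seq n eps l) ^ (n (Suc l) - 1))"

end

theory Submission
  imports Defs
begin

definition wt :: "real \<Rightarrow> 'a set \<Rightarrow> 'a set \<Rightarrow> real" where
  "wt e U S = e ^ card S * (1 - e) ^ (card U - card S)"

definition mu :: "real \<Rightarrow> 'a set \<Rightarrow> ('a set \<Rightarrow> bool) \<Rightarrow> real" where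
  "mu e U P = (\<Sum>S\<in>Pow U. wt e U S * (if P S then 1 else 0))"

lemma pow_decomp:
  assumes "finite A" "finite B" "A \<inter> B = {}"
  shows "(\<Sum>S\<in>Pow (A \<union> B). g S) = (\<Sum>S1\<in>Pow A. \<Sum>S2\<in>Pow B. g (S1 \<union> S2))"
proof -
  have bij: "bij_betw (\<lambda>(S1,S2). S1 \<union> S2) (Pow A \<times> Pow B) (Pow (A \<union> B))"
    unfolding bij_betw_def
  proof
    show "inj_on (\<lambda>(S1,S2). S1 \<union> S2) (Pow A \<times> Pow B)"
    proof (rule inj_onI, clarify)
      fix S1 S2 T1 T2 assume h: "S1 \<subseteq> A" "S2 \<subseteq> B" "T1 \<subseteq> A" "T2 \<subseteq> B"
        "S1 \<union> S2 = T1 \<union> T2"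
      have "S1 = (S1 \<union> S2) \<inter> A" using h assms(3) by blast
      moreover have "T1 = (T1 \<union> T2) \<inter> A" using h assms(3) by blast
      moreover have "S2 = (S1 \<union> S2) \<inter> B" using h assms(3) by blast
      moreover have "T2 = (T1 \<union> T2) \<inter> B" using h assms(3) by blast
      ultimately show "S1 = T1 \<and> S2 = T2" using h(5) by metis
    qed
    show "(\<lambda>(S1,S2). S1 \<union> S2) ` (Pow A \<times> Pow B) = Pow (A \<union> B)"
    proof
      show "(\<lambda>(S1,S2). S1 \<union> S2) ` (Pow A \<times> Pow B) \<subseteq> Pow (A \<union> B)" by auto
      show "Pow (A \<union> B) \<subseteq> (\<lambda>(S1,S2). S1 \<union> S2) ` (Pow A \<times> Pow B)"
      proof
        fix S assume "S \<in> Pow (A \<union> B)"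
        then have "S = (\<lambda>(S1,S2). S1 \<union> S2) (S \<inter> A, S \<inter> B)" "(S \<inter> A, S \<inter> B) \<in> Pow A \<times> Pow B"
          by auto
        then show "S \<in> (\<lambda>(S1,S2). S1 \<union> S2) ` (Pow A \<times> Pow B)" by blast
      qed
    qed
  qed
  have "(\<Sum>S\<in>Pow (A \<union> B). g S) = (\<Sum>p\<in>Pow A \<times> Pow B. g ((\<lambda>(S1,S2). S1 \<union> S2) p))"
    using sum.reindex_bij_betw[OF bij, of g] by simp
  also have "\<dots> = (\<Sum>S1\<in>Pow A. \<Sum>S2\<in>Pow B. g (S1 \<union> S2))"
    by (simp add: sum.cartesian_product split_def)
  finally show ?thesis .
qed

lemma wt_union:
  assumes "finite A" "finite B" "A \<inter> B = {}" "S1 \<subseteq> A" "S2 \<subseteq> B"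
  shows "wt e (A \<union> B) (S1 \<union> S2) = wt e A S1 * wt e B S2"
proof -
  have f: "finite S1" "finite S2" using assms finite_subset by blast+
  have c1: "card (S1 \<union> S2) = card S1 + card S2"
    using assms f by (intro card_Un_disjoint) auto
  have c2: "card (A \<union> B) = card A + card B" using assms card_Un_disjoint by blast
  have "card S1 \<le> card A" "card S2 \<le> card B" using assms card_mono by blast+
  then have "card (A \<union> B) - card (S1 \<union> S2) = (card A - card S1) + (card B - card S2)"
    using c1 c2 by simp
  then show ?thesis unfolding wt_def using c1 by (simp add: power_add algebra_simps)
qed

lemma mass: "finite U \<Longrightarrow> (\<Sum>S\<in>Pow U. wt e U S) = 1"
proof (induction U rule: finite_induct)
  case empty
  then show ?case by (simp add: wt_def)
next
  case (insert x F)
  have "(\<Sum>S\<in>Pow (insert x F). wt e (insert x F) S) = (\<Sum>S\<in>Pow ({x} \<union> F). wt e ({x} \<union> F) S)"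
    by simp
  also have "\<dots> = (\<Sum>S1\<in>Pow {x}. \<Sum>S2\<in>Pow F. wt e ({x} \<union> F) (S1 \<union> S2))"
    using insert by (intro pow_decomp) auto
  also have "\<dots> = (\<Sum>S1\<in>Pow {x}. \<Sum>S2\<in>Pow F. wt e {x} S1 * wt e F S2)"
    using insert by (intro sum.cong refl wt_union) auto
  also have "\<dots> = (\<Sum>S1\<in>Pow {x}. wt e {x} S1)"
    by (simp add: sum_distrib_left[symmetric] insert.IH)
  also have "\<dots> = 1"
  proof -
    have "Pow {x} = {{}, {x}}" by blast
    then show ?thesis by (simp add: wt_def)
  qed
  finally show ?case .
qed

lemma split_inter: "S1 \<subseteq> Va \<Longrightarrow> S2 \<subseteq> Vb \<Longrightarrow> Va \<inter> Vb = {} \<Longrightarrow> (S1 \<union> S2) \<inter> Va = S1"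
  by blast

lemma mu_local:
  assumes "finite U" "V \<subseteq> U" "\<forall>S. P S = P (S \<inter> V)"
  shows "mu e U P = mu e V P"
proof -
  have fV: "finite V" using assms finite_subset by auto
  have U: "U = V \<union> (U - V)" using assms by auto
  have "mu e U P = (\<Sum>S\<in>Pow (V \<union> (U - V)). wt e (V \<union> (U - V)) S * (if P S then 1 else 0))"
    unfolding mu_def using U by simp
  also have "\<dots> = (\<Sum>S1\<in>Pow V. \<Sum>S2\<in>Pow (U - V). wt e (V \<union> (U - V)) (S1 \<union> S2) * (if P (S1 \<union> S2) then 1 else 0))"
    using fV assms by (intro pow_decomp) auto
  also have "\<dots> = (\<Sum>S1\<in>Pow V. \<Sum>S2\<in>Pow (U - V). (wt e V S1 * (if P S1 then 1 else 0)) * wt e (U - V) S2)"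
  proof (intro sum.cong refl)
    fix S1 S2 assume h: "S1 \<in> Pow V" "S2 \<in> Pow (U - V)"
    have "(S1 \<union> S2) \<inter> V = S1" using h by blast
    then have "P (S1 \<union> S2) = P S1" using assms(3) by metis
    then show "wt e (V \<union> (U - V)) (S1 \<union> S2) * (if P (S1 \<union> S2) then 1 else 0) =
      (wt e V S1 * (if P S1 then 1 else 0)) * wt e (U - V) S2"
      using wt_union[of V "U - V" S1 S2 e] h fV assms by auto
  qed
  also have "\<dots> = (\<Sum>S1\<in>Pow V. wt e V S1 * (if P S1 then 1 else 0))"
    using mass[of "U - V" e] assms by (simp add: sum_distrib_left[symmetric])
  finally show ?thesis unfolding mu_def .
qed

lemma mu_indep:
  assumes "finite U" "Va \<subseteq> U" "Vb \<subseteq> U" "Va \<inter> Vb = {}"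
    "\<forall>S. P S = P (S \<inter> Va)" "\<forall>S. Q S = Q (S \<inter> Vb)"
  shows "mu e U (\<lambda>S. P S \<and> Q S) = mu e U P * mu e U Q"
proof -
  have f1: "finite Va" and f2: "finite Vb" using assms finite_subset by blast+
  have "mu e U (\<lambda>S. P S \<and> Q S) = mu e (Va \<union> Vb) (\<lambda>S. P S \<and> Q S)"
  proof (rule mu_local)
    show "\<forall>S. (P S \<and> Q S) = (P (S \<inter> (Va \<union> Vb)) \<and> Q (S \<inter> (Va \<union> Vb)))"
    proof
      fix S
      have "S \<inter> (Va \<union> Vb) \<inter> Va = S \<inter> Va" "S \<inter> (Va \<union> Vb) \<inter> Vb = S \<inter> Vb" by auto
      then show "(P S \<and> Q S) = (P (S \<inter> (Va \<union> Vb)) \<and> Q (S \<inter> (Va \<union> Vb)))"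
        using assms(5,6) by metis
    qed
  qed (use assms in auto)
  also have "\<dots> = (\<Sum>S1\<in>Pow Va. \<Sum>S2\<in>Pow Vb. wt e (Va \<union> Vb) (S1 \<union> S2) * (if P (S1 \<union> S2) \<and> Q (S1 \<union> S2) then 1 else 0))"
    unfolding mu_def using f1 f2 assms by (intro pow_decomp) auto
  also have "\<dots> = (\<Sum>S1\<in>Pow Va. \<Sum>S2\<in>Pow Vb. (wt e Va S1 * (if P S1 then 1 else 0)) * (wt e Vb S2 * (if Q S2 then 1 else 0)))"
  proof (intro sum.cong refl)
    fix S1 S2 assume h: "S1 \<in> Pow Va" "S2 \<in> Pow Vb"
    have "(S1 \<union> S2) \<inter> Va = S1" "(S1 \<union> S2) \<inter> Vb = S2" using h assms(4) by blast+
    then have "P (S1 \<union> S2) = P S1" "Q (S1 \<union> S2) = Q S2" using assms(5,6) by metis+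
    then show "wt e (Va \<union> Vb) (S1 \<union> S2) * (if P (S1 \<union> S2) \<and> Q (S1 \<union> S2) then 1 else 0) =
      (wt e Va S1 * (if P S1 then 1 else 0)) * (wt e Vb S2 * (if Q S2 then 1 else 0))"
      using wt_union[of Va Vb S1 S2 e] h f1 f2 assms by auto
  qed
  also have "\<dots> = mu e Va P * mu e Vb Q"
    unfolding mu_def by (simp add: sum_product)
  also have "\<dots> = mu e U P * mu e U Q"
    using mu_local[of U Va P e] mu_local[of U Vb Q e] assms by simp
  finally show ?thesis .
qed

lemma mu_true: "finite U \<Longrightarrow> mu e U (\<lambda>S. True) = 1"
  unfolding mu_def using mass by simp

lemma mu_compl: "finite U \<Longrightarrow> mu e U (\<lambda>S. \<not> P S) = 1 - mu e U P"
proof -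
  assume f: "finite U"
  have "mu e U (\<lambda>S. \<not> P S) + mu e U P = (\<Sum>S\<in>Pow U. wt e U S)"
    unfolding mu_def sum.distrib[symmetric] by (intro sum.cong) auto
  then show ?thesis using mass[OF f] by simp
qed

lemma wt_nonneg: "0 \<le> e \<Longrightarrow> e \<le> 1 \<Longrightarrow> 0 \<le> wt e U S"
  unfolding wt_def by simp

lemma mu_mono:
  assumes "0 \<le> e" "e \<le> 1" "\<forall>S. P S \<longrightarrow> Q S"
  shows "mu e U P \<le> mu e U Q"
  unfolding mu_def using assms wt_nonneg[OF assms(1,2)]
  by (intro sum_mono) (auto intro: mult_left_mono)

lemma mu_union_bound:
  assumes "0 \<le> e" "e \<le> 1" "finite I"
  shows "mu e U (\<lambda>S. \<exists>i\<in>I. P i S) \<le> (\<Sum>i\<in>I. mu e U (P i))"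
proof -
  have "(\<Sum>i\<in>I. mu e U (P i)) = (\<Sum>S\<in>Pow U. wt e U S * (\<Sum>i\<in>I. if P i S then 1 else 0))"
    unfolding mu_def sum_distrib_left by (rule sum.swap)
  moreover have "mu e U (\<lambda>S. \<exists>i\<in>I. P i S) \<le> (\<Sum>S\<in>Pow U. wt e U S * (\<Sum>i\<in>I. if P i S then 1 else 0))"
    unfolding mu_def
  proof (intro sum_mono mult_left_mono wt_nonneg assms)
    fix S
    show "(if \<exists>i\<in>I. P i S then 1 else 0) \<le> (\<Sum>i\<in>I. if P i S then 1 else (0::real))"
    proof (cases "\<exists>i\<in>I. P i S")
      case True
      then obtain i where "i \<in> I" "P i S" by blast
      then have "(if P i S then 1 else (0::real)) \<le> (\<Sum>i\<in>I. if P i S then 1 else (0::real))"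
        using assms(3) by (intro member_le_sum) auto
      then show ?thesis using True \<open>P i S\<close> by simp
    next
      case False
      then show ?thesis by (simp add: sum_nonneg)
    qed
  qed
  ultimately show ?thesis by simp
qed

lemma mu_forall:
  assumes "finite U" "finite B"
  shows "(\<forall>b\<in>B. V b \<subseteq> U) \<longrightarrow> (\<forall>b\<in>B. \<forall>c\<in>B. b \<noteq> c \<longrightarrow> V b \<inter> V c = {}) \<longrightarrow>
    (\<forall>b\<in>B. \<forall>S. P b S = P b (S \<inter> V b)) \<longrightarrow>
    mu e U (\<lambda>S. \<forall>b\<in>B. P b S) = (\<Prod>b\<in>B. mu e U (P b))"
  using assms(2)
proof (induction B rule: finite_induct)
  case empty
  then show ?case using mu_true[OF assms(1)] by simp
next
  case (insert x F)
  show ?case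
  proof (intro impI)
    assume h1: "\<forall>b\<in>insert x F. V b \<subseteq> U"
      and h2: "\<forall>b\<in>insert x F. \<forall>c\<in>insert x F. b \<noteq> c \<longrightarrow> V b \<inter> V c = {}"
      and h3: "\<forall>b\<in>insert x F. \<forall>S. P b S = P b (S \<inter> V b)"
    have "mu e U (\<lambda>S. \<forall>b\<in>insert x F. P b S) = mu e U (\<lambda>S. P x S \<and> (\<forall>b\<in>F. P b S))"
      by simp
    also have "\<dots> = mu e U (P x) * mu e U (\<lambda>S. \<forall>b\<in>F. P b S)"
    proof (rule mu_indep[where Va = "V x" and Vb = "\<Union>(V ` F)"])
      show "V x \<inter> \<Union>(V ` F) = {}"
      proof -
        have "V x \<inter> V b = {}" if "b \<in> F" for b
        proof -
          have "b \<noteq> x" using insert.hyps(2) that by blast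
          then show ?thesis using h2 that by simp
        qed
        then show ?thesis by blast
      qed
      show "\<forall>S. (\<forall>b\<in>F. P b S) = (\<forall>b\<in>F. P b (S \<inter> \<Union>(V ` F)))"
      proof (intro allI)
        fix S
        have "P b S = P b (S \<inter> \<Union>(V ` F))" if "b \<in> F" for b
        proof -
          have e1: "P b S = P b (S \<inter> V b)" using h3 that by blast
          have e2: "P b (S \<inter> \<Union>(V ` F)) = P b (S \<inter> \<Union>(V ` F) \<inter> V b)" using h3 that by blast
          have e3: "S \<inter> \<Union>(V ` F) \<inter> V b = S \<inter> V b" using that by blast
          show ?thesis using e1 e2 e3 by simp
        qed
        then show "(\<forall>b\<in>F. P b S) = (\<forall>b\<in>F. P b (S \<inter> \<Union>(V ` F)))" by blast
      qed
      show "finite U" by (rule assms(1))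
      show "V x \<subseteq> U" using h1 by blast
      show "\<Union>(V ` F) \<subseteq> U" using h1 by blast
      show "\<forall>S. P x S = P x (S \<inter> V x)" using h3 by blast
    qed
    also have "\<dots> = (\<Prod>b\<in>insert x F. mu e U (P b))"
    proof -
      have ih: "mu e U (\<lambda>S. \<forall>b\<in>F. P b S) = (\<Prod>b\<in>F. mu e U (P b))"
      proof -
        have p1: "\<forall>b\<in>F. V b \<subseteq> U" using h1 by blast
        have p2: "\<forall>b\<in>F. \<forall>c\<in>F. b \<noteq> c \<longrightarrow> V b \<inter> V c = {}" using h2 by blast
        have p3: "\<forall>b\<in>F. \<forall>S. P b S = P b (S \<inter> V b)" using h3 by blast
        show ?thesis using insert.IH p1 p2 p3 by (elim impE)
      qed
      show ?thesis unfolding ih using insert.hyps by simp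
    qed
    finally show "mu e U (\<lambda>S. \<forall>b\<in>insert x F. P b S) = (\<Prod>b\<in>insert x F. mu e U (P b))" .
  qed
qed

definition Dset :: "nat \<Rightarrow> (nat \<Rightarrow> nat) \<Rightarrow> nat \<Rightarrow> (nat \<Rightarrow> nat) \<Rightarrow> (nat \<Rightarrow> nat) set" where
  "Dset m n l a = {c \<in> spc_positions m n. \<forall>i\<in>{l<..m}. c i = a i}"

lemma upd_pos:
  assumes "a \<in> spc_positions m n" "k \<in> {1..m}" "b \<in> {1..n k}"
  shows "a(k := b) \<in> spc_positions m n"
  using assms unfolding spc_positions_def by (auto simp: PiE_iff extensional_def)

lemma finite_pos: "finite (spc_positions m n)"
  unfolding spc_positions_def by (intro finite_PiE) auto

lemma Dset_sub: "Dset m n l a \<subseteq> spc_positions m n"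
  unfolding Dset_def by auto

lemma Dset_mono: "Dset m n l a \<subseteq> Dset m n (Suc l) a"
  unfolding Dset_def by auto

lemma Dset_upd: "Dset m n l (a(Suc l := b)) \<subseteq> Dset m n (Suc l) a"
  unfolding Dset_def by auto

lemma Dset_disj:
  assumes "Suc l \<le> m" "a (Suc l) \<noteq> b (Suc l)"
  shows "Dset m n l a \<inter> Dset m n l b = {}"
  using assms unfolding Dset_def by auto

lemma E_local:
  "a \<in> spc_positions m n \<Longrightarrow> l \<le> m \<Longrightarrow> elias_E n S l a = elias_E n (S \<inter> Dset m n l a) l a"
proof (induction l arbitrary: a S)
  case 0
  then have "a \<in> Dset m n 0 a" unfolding Dset_def by auto
  then show ?case by auto
next
  case (Suc l)
  have lm: "l \<le> m" using Suc.prems by simp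
  have c1: "elias_E n S l a = elias_E n (S \<inter> Dset m n (Suc l) a) l a"
  proof -
    have "elias_E n S l a = elias_E n (S \<inter> Dset m n l a) l a" using Suc.IH Suc.prems lm by blast
    moreover have "elias_E n (S \<inter> Dset m n (Suc l) a) l a = elias_E n (S \<inter> Dset m n (Suc l) a \<inter> Dset m n l a) l a"
      using Suc.IH Suc.prems lm by blast
    moreover have "S \<inter> Dset m n (Suc l) a \<inter> Dset m n l a = S \<inter> Dset m n l a" using Dset_mono by blast
    ultimately show ?thesis by simp
  qed
  have c2: "elias_E n S l (a(Suc l := b)) = elias_E n (S \<inter> Dset m n (Suc l) a) l (a(Suc l := b))"
    if "b \<in> {1..n (Suc l)}" for b
  proof -
    have ap: "a(Suc l := b) \<in> spc_positions m n" using upd_pos Suc.prems that by simp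
    have "elias_E n S l (a(Suc l := b)) = elias_E n (S \<inter> Dset m n l (a(Suc l := b))) l (a(Suc l := b))"
      using Suc.IH ap lm by blast
    moreover have "elias_E n (S \<inter> Dset m n (Suc l) a) l (a(Suc l := b)) =
       elias_E n (S \<inter> Dset m n (Suc l) a \<inter> Dset m n l (a(Suc l := b))) l (a(Suc l := b))"
      using Suc.IH ap lm by blast
    moreover have "S \<inter> Dset m n (Suc l) a \<inter> Dset m n l (a(Suc l := b)) = S \<inter> Dset m n l (a(Suc l := b))"
      using Dset_upd by blast
    ultimately show ?thesis by simp
  qed
  show ?case unfolding elias_E.simps using c1 c2 by auto
qed

lemma E_prob:
  "a \<in> spc_positions m n \<Longrightarrow> l \<le> m \<Longrightarrow>
   mu e (spc_positions m n) (\<lambda>S. \<not> elias_E n S l a) = eps_seq n e l"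
proof (induction l arbitrary: a)
  case 0
  have "mu e (spc_positions m n) (\<lambda>S. \<not> elias_E n S 0 a) = mu e {a} (\<lambda>S. \<not> elias_E n S 0 a)"
    using 0 finite_pos by (intro mu_local) auto
  also have "\<dots> = e"
  proof -
    have "Pow {a} = {{}, {a}}" by blast
    then show ?thesis unfolding mu_def wt_def by simp
  qed
  finally show ?case by simp
next
  case (Suc l)
  define U where "U = spc_positions m n"
  define B where "B = {1..n (Suc l)} - {a (Suc l)}"
  have lm: "l \<le> m" using Suc.prems by simp
  have fU: "finite U" unfolding U_def by (rule finite_pos)
  have aU: "a \<in> U" using Suc.prems U_def by simp
  have asl: "a (Suc l) \<in> {1..n (Suc l)}"
    using Suc.prems unfolding spc_positions_def by (auto simp: PiE_iff)
  have fB: "finite B" unfolding B_def by simp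
  have cB: "card B = n (Suc l) - 1" unfolding B_def using asl by simp
  have bU: "a(Suc l := b) \<in> U" if "b \<in> B" for b
    using upd_pos[of a m n "Suc l" b] Suc.prems that unfolding B_def U_def by auto
  have eq: "(\<lambda>S. \<not> elias_E n S (Suc l) a) =
      (\<lambda>S. \<not> elias_E n S l a \<and> \<not> (\<forall>b\<in>B. elias_E n S l (a(Suc l := b))))"
    unfolding B_def by auto
  have depa: "\<forall>S. elias_E n S l a = elias_E n (S \<inter> Dset m n l a) l a"
    using E_local Suc.prems lm by blast
  have depb: "\<forall>S. elias_E n S l (a(Suc l := b)) = elias_E n (S \<inter> Dset m n l (a(Suc l := b))) l (a(Suc l := b))"
    if "b \<in> B" for b
    using E_local bU[OF that] lm unfolding U_def by blast
  have ind: "mu e U (\<lambda>S. \<not> elias_E n S l a \<and> \<not> (\<forall>b\<in>B. elias_E n S l (a(Suc l := b)))) =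
     mu e U (\<lambda>S. \<not> elias_E n S l a) * mu e U (\<lambda>S. \<not> (\<forall>b\<in>B. elias_E n S l (a(Suc l := b))))"
  proof (rule mu_indep[where Va = "Dset m n l a" and Vb = "\<Union>b\<in>B. Dset m n l (a(Suc l := b))"])
    show "finite U" by (rule fU)
    show "Dset m n l a \<subseteq> U" unfolding U_def by (rule Dset_sub)
    show "(\<Union>b\<in>B. Dset m n l (a(Suc l := b))) \<subseteq> U" unfolding U_def using Dset_sub by blast
    show "Dset m n l a \<inter> (\<Union>b\<in>B. Dset m n l (a(Suc l := b))) = {}"
    proof -
      have "Dset m n l a \<inter> Dset m n l (a(Suc l := b)) = {}" if "b \<in> B" for b
        using Dset_disj[of l m a "a(Suc l := b)" n] Suc.prems that unfolding B_def by auto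
      then show ?thesis by blast
    qed
    show "\<forall>S. (\<not> elias_E n S l a) = (\<not> elias_E n (S \<inter> Dset m n l a) l a)"
      using depa by blast
    show "\<forall>S. (\<not> (\<forall>b\<in>B. elias_E n S l (a(Suc l := b)))) =
       (\<not> (\<forall>b\<in>B. elias_E n (S \<inter> (\<Union>b\<in>B. Dset m n l (a(Suc l := b)))) l (a(Suc l := b))))"
    proof
      fix S
      have "elias_E n S l (a(Suc l := b)) = elias_E n (S \<inter> (\<Union>b\<in>B. Dset m n l (a(Suc l := b)))) l (a(Suc l := b))"
        if "b \<in> B" for b
      proof -
        have e1: "elias_E n S l (a(Suc l := b)) = elias_E n (S \<inter> Dset m n l (a(Suc l := b))) l (a(Suc l := b))"
          using depb[OF that] by blast
        have e2: "elias_E n (S \<inter> (\<Union>b\<in>B. Dset m n l (a(Suc l := b)))) l (a(Suc l := b)) =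
          elias_E n (S \<inter> (\<Union>b\<in>B. Dset m n l (a(Suc l := b))) \<inter> Dset m n l (a(Suc l := b))) l (a(Suc l := b))"
          using depb[OF that] by blast
        have e3: "S \<inter> (\<Union>b\<in>B. Dset m n l (a(Suc l := b))) \<inter> Dset m n l (a(Suc l := b)) = S \<inter> Dset m n l (a(Suc l := b))"
          using that by blast
        show ?thesis using e1 e2 e3 by simp
      qed
      then show "(\<not> (\<forall>b\<in>B. elias_E n S l (a(Suc l := b)))) =
       (\<not> (\<forall>b\<in>B. elias_E n (S \<inter> (\<Union>b\<in>B. Dset m n l (a(Suc l := b)))) l (a(Suc l := b))))"
        by blast
    qed
  qed
  have fa: "mu e U (\<lambda>S. \<forall>b\<in>B. elias_E n S l (a(Suc l := b))) =
      (\<Prod>b\<in>B. mu e U (\<lambda>S. elias_E n S l (a(Suc l := b))))"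
  proof -
    have h1: "\<forall>b\<in>B. Dset m n l (a(Suc l := b)) \<subseteq> U" unfolding U_def using Dset_sub by blast
    have h2: "\<forall>b\<in>B. \<forall>c\<in>B. b \<noteq> c \<longrightarrow> Dset m n l (a(Suc l := b)) \<inter> Dset m n l (a(Suc l := c)) = {}"
      using Dset_disj[of l m _ _ n] Suc.prems by simp
    have h3: "\<forall>b\<in>B. \<forall>S. elias_E n S l (a(Suc l := b)) = elias_E n (S \<inter> Dset m n l (a(Suc l := b))) l (a(Suc l := b))"
      using depb by blast
    show ?thesis
      using mu_forall[OF fU fB, of "\<lambda>b. Dset m n l (a(Suc l := b))" "\<lambda>b S. elias_E n S l (a(Suc l := b))" e]
        h1 h2 h3 by blast
  qed
  have each: "mu e U (\<lambda>S. elias_E n S l (a(Suc l := b))) = 1 - eps_seq n e l" if "b \<in> B" for b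
  proof -
    have "mu e U (\<lambda>S. \<not> \<not> elias_E n S l (a(Suc l := b))) = 1 - mu e U (\<lambda>S. \<not> elias_E n S l (a(Suc l := b)))"
      by (rule mu_compl[OF fU])
    moreover have "mu e U (\<lambda>S. \<not> elias_E n S l (a(Suc l := b))) = eps_seq n e l"
      using Suc.IH bU[OF that] lm unfolding U_def by blast
    ultimately show ?thesis by simp
  qed
  have "mu e U (\<lambda>S. \<not> elias_E n S (Suc l) a) =
     mu e U (\<lambda>S. \<not> elias_E n S l a) * (1 - mu e U (\<lambda>S. \<forall>b\<in>B. elias_E n S l (a(Suc l := b))))"
  proof -
    have s1: "mu e U (\<lambda>S. \<not> elias_E n S (Suc l) a) =
      mu e U (\<lambda>S. \<not> elias_E n S l a \<and> \<not> (\<forall>b\<in>B. elias_E n S l (a(Suc l := b))))"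
      by (subst eq) (rule refl)
    have s2: "mu e U (\<lambda>S. \<not> (\<forall>b\<in>B. elias_E n S l (a(Suc l := b)))) =
      1 - mu e U (\<lambda>S. \<forall>b\<in>B. elias_E n S l (a(Suc l := b)))"
      by (rule mu_compl[OF fU])
    show ?thesis by (simp only: s1 ind s2)
  qed
  also have "\<dots> = eps_seq n e l * (1 - (1 - eps_seq n e l) ^ (n (Suc l) - 1))"
    using fa each Suc.IH[OF _ lm] aU cB unfolding U_def by simp
  finally show ?case unfolding U_def by simp
qed

theorem theorem1:
  fixes m :: nat and n :: "nat \<Rightarrow> nat" and eps :: real
  assumes "m \<ge> 1" and "\<forall>l\<in>{1..m}. n l \<ge> 2" and "0 \<le> eps" and "eps \<le> 1"
  shows "eps_seq n eps m \<le> elias_PE m n eps \<and>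
         elias_PE m n eps \<le> real (\<Prod>l\<in>{1..m}. n l - 1) * eps_seq n eps m"
proof -
  define U where "U = spc_positions m n"
  define I where "I = spc_info m n"
  have PE: "elias_PE m n eps = mu eps U (\<lambda>S. \<exists>a\<in>I. \<not> elias_E n S m a)"
    unfolding elias_PE_def mu_def wt_def U_def I_def elias_block_error_def by simp
  have IU: "I \<subseteq> U" unfolding I_def U_def spc_info_def by auto
  have Ieq: "I = PiE {1..m} (\<lambda>l. {1..n l - 1})"
    unfolding I_def spc_info_def spc_positions_def
    by (auto simp: PiE_iff extensional_def) (meson atLeastAtMost_iff diff_le_self order_trans)
  have fI: "finite I" unfolding Ieq by (intro finite_PiE) auto
  have cI: "card I = (\<Prod>l\<in>{1..m}. n l - 1)" unfolding Ieq by (simp add: card_PiE)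
  define a0 where "a0 = restrict (\<lambda>_. 1::nat) {1..m}"
  have a0I: "a0 \<in> I"
    using assms(2) unfolding Ieq a0_def by (auto simp: PiE_iff)
  have pa: "mu eps U (\<lambda>S. \<not> elias_E n S m a) = eps_seq n eps m" if "a \<in> I" for a
    using E_prob[of a m n m eps] IU that unfolding U_def by auto
  have lower: "eps_seq n eps m \<le> elias_PE m n eps"
    unfolding PE pa[OF a0I, symmetric] using a0I assms(3,4) by (intro mu_mono) auto
  have "elias_PE m n eps \<le> (\<Sum>a\<in>I. mu eps U (\<lambda>S. \<not> elias_E n S m a))"
    unfolding PE by (rule mu_union_bound[OF assms(3,4) fI, where U=U and P="\<lambda>a S. \<not> elias_E n S m a"])
  also have "\<dots> = (\<Sum>a\<in>I. eps_seq n eps m)" using pa by simp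
  also have "\<dots> = real (\<Prod>l\<in>{1..m}. n l - 1) * eps_seq n eps m" using cI by simp
  finally show ?thesis using lower by simp
qed

end
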